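(* Let $V$ be an infinite Gödel set. A sentence of the BS class w.r.t. validity is valid in $G_V$ if and only if it is valid in $G_n$ for every $n\ge2$; and a sentence of the BS class w.r.t. 1-satisfiability is 1-satisfiable in $G_V$ if and only if it is 1-satisfiable in $G_n$ for every $n\ge2$. In particular, $\mathrm{BS}(G_{[0,1]})=\bigcap_{n\ge2}\mathrm{BS}(G_n)$.
   Context: A Gödel set is a closed set $V\subseteq[0,1]$ with $0,1\in V$. A $V$-interpretation assigns to each $k$-ary predicate a function $U^k\to V$ on a nonempty domain $U$ (constants as usual); $\bot\mapsto0$, $\wedge,\vee$ are $\min,\max$, $\mathcal I(A\supset B)=1$ if $\mathcal I(A)\le\mathcal I(B)$ and $=\mathcal I(B)$ otherwise, $\forall,\exists$ are $\inf,\sup$ over $U$. A sentence is valid in $G_V$ if every $V$-interpretation gives it value $1$, and 1-satisfiable in $G_V$ if some $V$-interpretation gives it value $1$. $G_{[0,1]}$ is $G_V$ with $V=[0,1]$; for $n\ge2$, $G_n$ is $G_V$ with $V=\{1\}\cup\{1-1/k:1\le k\le n-1\}$. The BS class w.r.t. validity consists of sentences $\forall\bar x\exists\bar y\,\psi$, and w.r.t. 1-satisfiability of sentences $\exists\bar x\forall\bar y\,\psi$, with $\psi$ quantifier-free, tuples possibly empty, and no function symbols of positive arity. $\mathrm{BS}(G)$ denotes the set of BS sentences (w.r.t. validity) valid in $G$. *)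

theory Defs
  imports Complex_Main
begin

datatype trm = Var nat | Cst nat

datatype fm =
    Bot
  | Atom nat "trm list"
  | Conj fm fm
  | Disj fm fm
  | Impl fm fm
  | All nat fm
  | Ex nat fm

fun fv_trm :: "trm \<Rightarrow> nat set" where
  "fv_trm (Var x) = {x}"
| "fv_trm (Cst k) = {}"

fun fv :: "fm \<Rightarrow> nat set" where
  "fv Bot = {}"
| "fv (Atom P ts) = (\<Union>t\<in>set ts. fv_trm t)"
| "fv (Conj A B) = fv A \<union> fv B"
| "fv (Disj A B) = fv A \<union> fv B"
| "fv (Impl A B) = fv A \<union> fv B"
| "fv (All x A) = fv A - {x}"
| "fv (Ex x A) = fv A - {x}"

definition sentence :: "fm \<Rightarrow> bool" where
  "sentence A \<longleftrightarrow> fv A = {}"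

fun qfree :: "fm \<Rightarrow> bool" where
  "qfree Bot = True"
| "qfree (Atom P ts) = True"
| "qfree (Conj A B) = (qfree A \<and> qfree B)"
| "qfree (Disj A B) = (qfree A \<and> qfree B)"
| "qfree (Impl A B) = (qfree A \<and> qfree B)"
| "qfree (All x A) = False"
| "qfree (Ex x A) = False"

definition alls :: "nat list \<Rightarrow> fm \<Rightarrow> fm" where
  "alls xs A = foldr All xs A"

definition exs :: "nat list \<Rightarrow> fm \<Rightarrow> fm" where
  "exs xs A = foldr Ex xs A"

definition BS_val :: "fm \<Rightarrow> bool" where
  "BS_val A \<longleftrightarrow> sentence A \<and> (\<exists>xs ys B. qfree B \<and> A = alls xs (exs ys B))"

definition BS_sat :: "fm \<Rightarrow> bool" where
  "BS_sat A \<longleftrightarrow> sentence A \<and> (\<exists>xs ys B. qfree B \<and> A = exs xs (alls ys B))"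

definition goedel_set :: "real set \<Rightarrow> bool" where
  "goedel_set V \<longleftrightarrow> closed V \<and> V \<subseteq> {0..1} \<and> 0 \<in> V \<and> 1 \<in> V"

definition Gn :: "nat \<Rightarrow> real set" where
  "Gn n = {1} \<union> {1 - 1 / real k | k. 1 \<le> k \<and> k \<le> n - 1}"

fun eval_trm :: "(nat \<Rightarrow> 'u) \<Rightarrow> (nat \<Rightarrow> 'u) \<Rightarrow> trm \<Rightarrow> 'u" where
  "eval_trm c e (Var x) = e x"
| "eval_trm c e (Cst k) = c k"

definition gimp :: "real \<Rightarrow> real \<Rightarrow> real" where
  "gimp a b = (if a \<le> b then 1 else b)"

fun eval :: "'u set \<Rightarrow> (nat \<Rightarrow> 'u) \<Rightarrow> (nat \<Rightarrow> 'u list \<Rightarrow> real) \<Rightarrow> (nat \<Rightarrow> 'u) \<Rightarrow> fm \<Rightarrow> real" where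
  "eval U c p e Bot = 0"
| "eval U c p e (Atom P ts) = p P (map (eval_trm c e) ts)"
| "eval U c p e (Conj A B) = min (eval U c p e A) (eval U c p e B)"
| "eval U c p e (Disj A B) = max (eval U c p e A) (eval U c p e B)"
| "eval U c p e (Impl A B) = gimp (eval U c p e A) (eval U c p e B)"
| "eval U c p e (All x A) = (INF d\<in>U. eval U c p (e(x := d)) A)"
| "eval U c p e (Ex x A) = (SUP d\<in>U. eval U c p (e(x := d)) A)"

definition interp :: "real set \<Rightarrow> 'u set \<Rightarrow> (nat \<Rightarrow> 'u) \<Rightarrow> (nat \<Rightarrow> 'u list \<Rightarrow> real) \<Rightarrow> bool" where
  "interp V U c p \<longleftrightarrow> U \<noteq> {} \<and> (\<forall>k. c k \<in> U) \<and> (\<forall>P xs. set xs \<subseteq> U \<longrightarrow> p P xs \<in> V)"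

definition valid :: "'u itself \<Rightarrow> real set \<Rightarrow> fm \<Rightarrow> bool" where
  "valid (T :: 'u itself) V A \<longleftrightarrow>
     (\<forall>(U :: 'u set) c p e. interp V U c p \<and> range e \<subseteq> U \<longrightarrow> eval U c p e A = 1)"

definition sat1 :: "'u itself \<Rightarrow> real set \<Rightarrow> fm \<Rightarrow> bool" where
  "sat1 (T :: 'u itself) V A \<longleftrightarrow>
     (\<exists>(U :: 'u set) c p e. interp V U c p \<and> range e \<subseteq> U \<and> eval U c p e A = 1)"

end

theory Submission
  imports Defs
begin


fun csts_trm :: "trm \<Rightarrow> nat set" where
  "csts_trm (Var x) = {}"
| "csts_trm (Cst k) = {k}"

fun csts :: "fm \<Rightarrow> nat set" where
  "csts Bot = {}"
| "csts (Atom P ts) = (\<Union>t\<in>set ts. csts_trm t)"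
| "csts (Conj A B) = csts A \<union> csts B"
| "csts (Disj A B) = csts A \<union> csts B"
| "csts (Impl A B) = csts A \<union> csts B"
| "csts (All x A) = csts A"
| "csts (Ex x A) = csts A"

fun atoms :: "fm \<Rightarrow> (nat \<times> trm list) set" where
  "atoms Bot = {}"
| "atoms (Atom P ts) = {(P, ts)}"
| "atoms (Conj A B) = atoms A \<union> atoms B"
| "atoms (Disj A B) = atoms A \<union> atoms B"
| "atoms (Impl A B) = atoms A \<union> atoms B"
| "atoms (All x A) = atoms A"
| "atoms (Ex x A) = atoms A"

lemma finite_fv_trm: "finite (fv_trm t)" by (cases t) auto
lemma finite_csts_trm: "finite (csts_trm t)" by (cases t) auto
lemma finite_fv: "finite (fv A)" by (induction A) (auto simp: finite_fv_trm)
lemma finite_csts: "finite (csts A)" by (induction A) (auto simp: finite_csts_trm)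
lemma finite_atoms: "finite (atoms A)" by (induction A) auto

lemma eval_trm_agree:
  "(\<forall>k\<in>csts_trm t. c k = c' k) \<Longrightarrow> (\<forall>x\<in>fv_trm t. e x = e' x) \<Longrightarrow> eval_trm c e t = eval_trm c' e' t"
  by (cases t) auto

lemma eval_agree:
  "(\<forall>k\<in>csts D. c k = c' k) \<Longrightarrow> (\<forall>x\<in>fv D. e x = e' x) \<Longrightarrow> eval U c p e D = eval U c' p e' D"
proof (induction D arbitrary: e e')
  case (Atom P ts)
  have "map (eval_trm c e) ts = map (eval_trm c' e') ts"
    using Atom by (intro map_cong refl eval_trm_agree) auto
  then show ?case by (simp only: eval.simps)
next
  case (All x D)
  have "\<And>d. eval U c p (e(x:=d)) D = eval U c' p (e'(x:=d)) D"
    using All by (intro All.IH) auto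
  then show ?case by simp
next
  case (Ex x D)
  have "\<And>d. eval U c p (e(x:=d)) D = eval U c' p (e'(x:=d)) D"
    using Ex by (intro Ex.IH) auto
  then show ?case by simp
next
  case (Conj A B)
  have "eval U c p e A = eval U c' p e' A" "eval U c p e B = eval U c' p e' B"
    using Conj.prems by (intro Conj.IH; auto)+
  then show ?case by simp
next
  case (Disj A B)
  have "eval U c p e A = eval U c' p e' A" "eval U c p e B = eval U c' p e' B"
    using Disj.prems by (intro Disj.IH; auto)+
  then show ?case by simp
next
  case (Impl A B)
  have "eval U c p e A = eval U c' p e' A" "eval U c p e B = eval U c' p e' B"
    using Impl.prems by (intro Impl.IH; auto)+
  then show ?case by simp
qed auto

lemma eval_trm_in: "\<forall>k. c k \<in> U \<Longrightarrow> range e \<subseteq> U \<Longrightarrow> eval_trm c e t \<in> U"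
  by (cases t) auto

lemma eval_bounds:
  assumes "interp V U c p" "V \<subseteq> {0..1}"
  shows "range e \<subseteq> U \<Longrightarrow> eval U c p e D \<in> {0..1}"
proof (induction D arbitrary: e)
  case (Atom P ts)
  have "set (map (eval_trm c e) ts) \<subseteq> U"
    using Atom assms(1) eval_trm_in[of c U e] unfolding interp_def by auto
  then have "p P (map (eval_trm c e) ts) \<in> V" using assms unfolding interp_def by blast
  then show ?case using assms by auto
next
  case (Impl A B)
  then show ?case by (auto simp: gimp_def)
next
  case (All x D)
  have U: "U \<noteq> {}" using assms unfolding interp_def by auto
  have b: "\<And>d. d \<in> U \<Longrightarrow> eval U c p (e(x:=d)) D \<in> {0..1}"
    using All by (intro All.IH) auto
  obtain d0 where d0: "d0 \<in> U" using U by auto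
  have bb: "bdd_below ((\<lambda>d. eval U c p (e(x:=d)) D) ` U)"
    using b by (intro bdd_belowI[where m=0]) auto
  have "0 \<le> (INF d\<in>U. eval U c p (e(x:=d)) D)"
    using b U by (intro cINF_greatest) auto
  moreover have "(INF d\<in>U. eval U c p (e(x:=d)) D) \<le> 1"
    using cINF_lower[OF bb d0] b[OF d0] by auto
  ultimately show ?case by simp
next
  case (Ex x D)
  have U: "U \<noteq> {}" using assms unfolding interp_def by auto
  have b: "\<And>d. d \<in> U \<Longrightarrow> eval U c p (e(x:=d)) D \<in> {0..1}"
    using Ex by (intro Ex.IH) auto
  obtain d0 where d0: "d0 \<in> U" using U by auto
  have bb: "bdd_above ((\<lambda>d. eval U c p (e(x:=d)) D) ` U)"
    using b by (intro bdd_aboveI[where M=1]) auto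
  have "(SUP d\<in>U. eval U c p (e(x:=d)) D) \<le> 1"
    using b U by (intro cSUP_least) auto
  moreover have "0 \<le> (SUP d\<in>U. eval U c p (e(x:=d)) D)"
    using cSUP_upper[OF d0 bb] b[OF d0] by auto
  ultimately show ?case by simp
qed (auto simp: min_def max_def)



lemma interp_U: "interp V U c p \<Longrightarrow> U \<noteq> {}" unfolding interp_def by auto

lemma alls_le:
  assumes "interp V U c p" "V \<subseteq> {0..1}" "range g \<subseteq> U"
  shows "eval U c p g (alls xs C) \<le> eval U c p g C"
proof (induction xs)
  case Nil then show ?case by (simp add: alls_def)
next
  case (Cons x xs)
  have bb: "bdd_below ((\<lambda>d. eval U c p (g(x:=d)) (alls xs C)) ` U)"
    using eval_bounds[OF assms(1,2), of "g(x:=_)"] assms(3)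
    by (intro bdd_belowI[where m=0]) (auto, blast)
  have gx: "g x \<in> U" using assms(3) by auto
  have "eval U c p g (alls (x#xs) C) = (INF d\<in>U. eval U c p (g(x:=d)) (alls xs C))"
    by (simp add: alls_def)
  also have "\<dots> \<le> eval U c p (g(x:=g x)) (alls xs C)" using cINF_lower[OF bb gx] .
  also have "\<dots> \<le> eval U c p g C" using Cons by simp
  finally show ?case .
qed

lemma exs_ge:
  assumes "interp V U c p" "V \<subseteq> {0..1}" "range g \<subseteq> U"
  shows "eval U c p g C \<le> eval U c p g (exs xs C)"
proof (induction xs)
  case Nil then show ?case by (simp add: exs_def)
next
  case (Cons x xs)
  have bb: "bdd_above ((\<lambda>d. eval U c p (g(x:=d)) (exs xs C)) ` U)"
    using eval_bounds[OF assms(1,2), of "g(x:=_)"] assms(3)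
    by (intro bdd_aboveI[where M=1]) (auto, blast)
  have gx: "g x \<in> U" using assms(3) by auto
  have "eval U c p g C \<le> eval U c p (g(x:=g x)) (exs xs C)" using Cons by simp
  also have "\<dots> \<le> (SUP d\<in>U. eval U c p (g(x:=d)) (exs xs C))" using cSUP_upper[OF gx bb] .
  also have "\<dots> = eval U c p g (exs (x#xs) C)"
    by (simp add: exs_def)
  finally show ?case .
qed

lemma alls_witness:
  assumes "interp V U c p" "V \<subseteq> {0..1}"
  shows "range g \<subseteq> U \<Longrightarrow> eval U c p g (alls xs C) < 1 \<Longrightarrow> \<exists>g'. range g' \<subseteq> U \<and> eval U c p g' C < 1"
proof (induction xs arbitrary: g)
  case Nil then show ?case by (auto simp: alls_def)
next
  case (Cons x xs)
  have bb: "bdd_below ((\<lambda>d. eval U c p (g(x:=d)) (alls xs C)) ` U)"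
    using eval_bounds[OF assms(1,2), of "g(x:=_)"] Cons.prems(1)
    by (intro bdd_belowI[where m=0]) (auto, blast)
  have "(INF d\<in>U. eval U c p (g(x:=d)) (alls xs C)) < 1"
    using Cons.prems(2) by (simp add: alls_def)
  then obtain d where d: "d \<in> U" "eval U c p (g(x:=d)) (alls xs C) < 1"
    using cINF_less_iff[OF interp_U[OF assms(1)] bb] by blast
  have "range (g(x:=d)) \<subseteq> U" using d(1) Cons.prems(1) by auto
  then show ?case using Cons.IH[of "g(x:=d)"] d by blast
qed

lemma exs_witness:
  assumes "interp V U c p" "V \<subseteq> {0..1}"
  shows "range g \<subseteq> U \<Longrightarrow> 0 < eval U c p g (exs xs C) \<Longrightarrow> \<exists>g'. range g' \<subseteq> U \<and> 0 < eval U c p g' C"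
proof (induction xs arbitrary: g)
  case Nil then show ?case by (auto simp: exs_def)
next
  case (Cons x xs)
  have bb: "bdd_above ((\<lambda>d. eval U c p (g(x:=d)) (exs xs C)) ` U)"
    using eval_bounds[OF assms(1,2), of "g(x:=_)"] Cons.prems(1)
    by (intro bdd_aboveI[where M=1]) (auto, blast)
  have "0 < (SUP d\<in>U. eval U c p (g(x:=d)) (exs xs C))"
    using Cons.prems(2) by (simp add: exs_def)
  then obtain d where d: "d \<in> U" "0 < eval U c p (g(x:=d)) (exs xs C)"
    using less_cSUP_iff[OF interp_U[OF assms(1)] bb] by blast
  have "range (g(x:=d)) \<subseteq> U" using d(1) Cons.prems(1) by auto
  then show ?case using Cons.IH[of "g(x:=d)"] d by blast
qed

lemma qfree_U: "qfree B \<Longrightarrow> eval U c p g B = eval U' c p g B"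
  by (induction B) auto

lemma interp_sub: "interp V U c p \<Longrightarrow> U' \<subseteq> U \<Longrightarrow> U' \<noteq> {} \<Longrightarrow> \<forall>k. c' k \<in> U' \<Longrightarrow> interp V U' c' p"
  unfolding interp_def by blast

lemma exs_sub:
  assumes "interp V U c p" "V \<subseteq> {0..1}" "U' \<subseteq> U" "U' \<noteq> {}" "qfree B"
  shows "range g \<subseteq> U' \<Longrightarrow> eval U' c p g (exs ys B) \<le> eval U c p g (exs ys B)"
proof (induction ys arbitrary: g)
  case Nil then show ?case using qfree_U[OF assms(5), of U c p g U'] by (simp add: exs_def)
next
  case (Cons y ys)
  have bb: "bdd_above ((\<lambda>d. eval U c p (g(y:=d)) (exs ys B)) ` U)"
    using eval_bounds[OF assms(1,2), of "g(y:=_)"] Cons.prems(1) assms(3)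
    by (intro bdd_aboveI[where M=1]) (auto, blast)
  have "(SUP d\<in>U'. eval U' c p (g(y:=d)) (exs ys B)) \<le> (SUP d\<in>U. eval U c p (g(y:=d)) (exs ys B))"
  proof (rule cSUP_mono[OF assms(4) bb])
    fix n assume "n \<in> U'"
    show "\<exists>m\<in>U. eval U' c p (g(y:=n)) (exs ys B) \<le> eval U c p (g(y:=m)) (exs ys B)"
    proof (rule bexI[of _ n])
      show "n \<in> U" using \<open>n \<in> U'\<close> assms(3) by auto
      have "range (g(y:=n)) \<subseteq> U'" using \<open>n \<in> U'\<close> Cons.prems by auto
      then show "eval U' c p (g(y:=n)) (exs ys B) \<le> eval U c p (g(y:=n)) (exs ys B)" by (rule Cons.IH)
    qed
  qed
  then show ?case by (simp add: exs_def)
qed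

lemma alls_sub:
  assumes "interp V U c p" "V \<subseteq> {0..1}" "U' \<subseteq> U" "U' \<noteq> {}" "qfree B"
  shows "range g \<subseteq> U' \<Longrightarrow> eval U c p g (alls ys B) \<le> eval U' c p g (alls ys B)"
proof (induction ys arbitrary: g)
  case Nil then show ?case using qfree_U[OF assms(5), of U c p g U'] by (simp add: alls_def)
next
  case (Cons y ys)
  have bb: "bdd_below ((\<lambda>d. eval U c p (g(y:=d)) (alls ys B)) ` U)"
    using eval_bounds[OF assms(1,2), of "g(y:=_)"] Cons.prems(1) assms(3)
    by (intro bdd_belowI[where m=0]) (auto, blast)
  have "(INF d\<in>U. eval U c p (g(y:=d)) (alls ys B)) \<le> (INF d\<in>U'. eval U' c p (g(y:=d)) (alls ys B))"
  proof (rule cINF_mono[OF assms(4) bb])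
    fix m assume "m \<in> U'"
    show "\<exists>n\<in>U. eval U c p (g(y:=n)) (alls ys B) \<le> eval U' c p (g(y:=m)) (alls ys B)"
    proof (rule bexI[of _ m])
      show "m \<in> U" using \<open>m \<in> U'\<close> assms(3) by auto
      have "range (g(y:=m)) \<subseteq> U'" using \<open>m \<in> U'\<close> Cons.prems by auto
      then show "eval U c p (g(y:=m)) (alls ys B) \<le> eval U' c p (g(y:=m)) (alls ys B)" by (rule Cons.IH)
    qed
  qed
  then show ?case by (simp add: alls_def)
qed

lemma restrict:
  assumes "interp V U c p" "range e \<subseteq> U"
  shows "\<exists>U' c' e'. finite U' \<and> U' \<subseteq> U \<and> U' \<noteq> {} \<and> (\<forall>k. c' k \<in> U') \<and> range e' \<subseteq> U'
      \<and> eval U c' p e' C = eval U c p e C"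
proof -
  define U' where "U' = insert (e 0) (e ` fv C \<union> c ` csts C)"
  define c' where "c' = (\<lambda>k. if k \<in> csts C then c k else e 0)"
  define e' where "e' = (\<lambda>x. if x \<in> fv C then e x else e 0)"
  have "finite U'" unfolding U'_def using finite_fv finite_csts by auto
  moreover have "U' \<subseteq> U" unfolding U'_def using assms unfolding interp_def by auto
  moreover have "\<forall>k. c' k \<in> U'" unfolding c'_def U'_def by auto
  moreover have "range e' \<subseteq> U'" unfolding e'_def U'_def by auto
  moreover have "eval U c' p e' C = eval U c p e C"
    by (rule eval_agree) (auto simp: c'_def e'_def)
  ultimately show ?thesis by (intro exI[of _ U'] exI[of _ c'] exI[of _ e']) auto
qed



lemma mono_min: "mono f \<Longrightarrow> f (min a b) = min (f a) (f (b::real)::real)"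
  by (cases "a \<le> b") (auto simp: min_def mono_def dest: antisym)

lemma mono_max: "mono f \<Longrightarrow> f (max a b) = max (f a) (f (b::real)::real)"
  by (cases "a \<le> b") (auto simp: max_def mono_def dest: antisym)

lemma transfer:
  assumes W: "finite W" "0 \<in> W" "1 \<in> W" and f: "mono f" "f 0 = 0"
    and gi: "\<forall>a\<in>W. \<forall>b\<in>W. f (gimp a b) = gimp (f a) (f b)"
    and U: "U \<noteq> {}" "\<forall>k. c k \<in> U"
  shows "(\<forall>P ts xs. (P,ts) \<in> atoms D \<longrightarrow> set xs \<subseteq> U \<longrightarrow> length xs = length ts \<longrightarrow> p P xs \<in> W)
     \<Longrightarrow> range g \<subseteq> U \<Longrightarrow>
     eval U c p g D \<in> W \<and> eval U c (\<lambda>P xs. f (p P xs)) g D = f (eval U c p g D)"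
proof (induction D arbitrary: g)
  case Bot then show ?case using W f by simp
next
  case (Atom P ts)
  have "set (map (eval_trm c g) ts) \<subseteq> U" using Atom.prems(2) U eval_trm_in[of c U g] by auto
  then show ?case using Atom.prems(1) by auto
next
  case (Conj A B)
  then have "eval U c p g A \<in> W \<and> eval U c (\<lambda>P xs. f (p P xs)) g A = f (eval U c p g A)"
     "eval U c p g B \<in> W \<and> eval U c (\<lambda>P xs. f (p P xs)) g B = f (eval U c p g B)" by auto
  then show ?case using mono_min[OF f(1)] by (auto simp: min_def)
next
  case (Disj A B)
  then have "eval U c p g A \<in> W \<and> eval U c (\<lambda>P xs. f (p P xs)) g A = f (eval U c p g A)"
     "eval U c p g B \<in> W \<and> eval U c (\<lambda>P xs. f (p P xs)) g B = f (eval U c p g B)" by auto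
  then show ?case using mono_max[OF f(1)] by (auto simp: max_def)
next
  case (Impl A B)
  then have "eval U c p g A \<in> W \<and> eval U c (\<lambda>P xs. f (p P xs)) g A = f (eval U c p g A)"
     "eval U c p g B \<in> W \<and> eval U c (\<lambda>P xs. f (p P xs)) g B = f (eval U c p g B)" by auto
  then show ?case using gi W by (auto simp: gimp_def)
next
  case (All x D)
  define S where "S = (\<lambda>d. eval U c p (g(x:=d)) D) ` U"
  have IH: "\<And>d. d \<in> U \<Longrightarrow> eval U c p (g(x:=d)) D \<in> W \<and>
      eval U c (\<lambda>P xs. f (p P xs)) (g(x:=d)) D = f (eval U c p (g(x:=d)) D)"
    using All by (intro All.IH) auto
  have SW: "S \<subseteq> W" using IH unfolding S_def by auto
  have fS: "finite S" using SW W(1) finite_subset by blast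
  have neS: "S \<noteq> {}" using U unfolding S_def by auto
  have img: "(\<lambda>d. eval U c (\<lambda>P xs. f (p P xs)) (g(x:=d)) D) ` U = f ` S"
    unfolding S_def image_image using IH by auto
  have "eval U c p g (All x D) = Min S" using cInf_eq_Min[OF fS neS] by (simp add: S_def)
  moreover have "eval U c (\<lambda>P xs. f (p P xs)) g (All x D) = Min (f ` S)"
    using cInf_eq_Min[of "f ` S"] fS neS img by simp
  moreover have "Min S \<in> W" using Min_in[OF fS neS] SW by auto
  ultimately show ?case using mono_Min_commute[OF f(1) fS neS] by simp
next
  case (Ex x D)
  define S where "S = (\<lambda>d. eval U c p (g(x:=d)) D) ` U"
  have IH: "\<And>d. d \<in> U \<Longrightarrow> eval U c p (g(x:=d)) D \<in> W \<and>
      eval U c (\<lambda>P xs. f (p P xs)) (g(x:=d)) D = f (eval U c p (g(x:=d)) D)"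
    using Ex by (intro Ex.IH) auto
  have SW: "S \<subseteq> W" using IH unfolding S_def by auto
  have fS: "finite S" using SW W(1) finite_subset by blast
  have neS: "S \<noteq> {}" using U unfolding S_def by auto
  have img: "(\<lambda>d. eval U c (\<lambda>P xs. f (p P xs)) (g(x:=d)) D) ` U = f ` S"
    unfolding S_def image_image using IH by auto
  have "eval U c p g (Ex x D) = Max S" using cSup_eq_Max[OF fS neS] by (simp add: S_def)
  moreover have "eval U c (\<lambda>P xs. f (p P xs)) g (Ex x D) = Max (f ` S)"
    using cSup_eq_Max[of "f ` S"] fS neS img by simp
  moreover have "Max S \<in> W" using Max_in[OF fS neS] SW by auto
  ultimately show ?case using mono_Max_commute[OF f(1) fS neS] by simp
qed

lemma strict_gimp:
  assumes "\<forall>a\<in>W. \<forall>b\<in>W. a < b \<longrightarrow> f a < f b" "mono f" "f 1 = 1" "1 \<in> W"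
  shows "\<forall>a\<in>W. \<forall>b\<in>W. f (gimp a b) = gimp (f a) (f b)"
proof (intro ballI)
  fix a b assume ab: "a \<in> W" "b \<in> W"
  show "f (gimp a b) = gimp (f a) (f b)"
  proof (cases "a \<le> b")
    case True
    then have "f a \<le> f b" using assms(2) by (auto simp: mono_def)
    then show ?thesis using True assms(3) by (simp add: gimp_def)
  next
    case False
    then have "f b < f a" using assms(1) ab by auto
    then show ?thesis using False by (simp add: gimp_def)
  qed
qed

lemma embed:
  fixes W K :: "real set"
  assumes W: "finite W" "W \<subseteq> {0..1}" "0 \<in> W" "1 \<in> W"
    and K: "finite K" "K \<subseteq> {0..1}" "0 \<in> K" "1 \<in> K" "card K = card W"
  shows "\<exists>f. mono f \<and> f 0 = 0 \<and> f 1 = 1 \<and> (\<forall>a\<in>W. \<forall>b\<in>W. a < b \<longrightarrow> f a < f b) \<and> range f \<subseteq> K"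
proof -
  define N where "N = card W"
  define ks where "ks = sorted_list_of_set K"
  define idx where "idx = (\<lambda>v::real. card {w\<in>W. w < v})"
  define f where "f = (\<lambda>v. ks ! min (idx v) (N - 1))"
  have lks: "length ks = N" unfolding ks_def N_def using K by simp
  have sks: "set ks = K" unfolding ks_def using K by simp
  have N1: "N \<ge> 1" unfolding N_def using W by (metis One_nat_def card_0_eq empty_iff less_one linorder_not_le)
  have sorted: "sorted ks" unfolding ks_def by simp
  have ssorted: "sorted_wrt (<) ks" unfolding ks_def by (rule strict_sorted_list_of_set)
  have inK: "\<And>i. i < N \<Longrightarrow> ks ! i \<in> K" using lks sks nth_mem by blast
  have le_all: "\<And>i j. i \<le> j \<Longrightarrow> j < N \<Longrightarrow> ks ! i \<le> ks ! j"
    using sorted_nth_mono[OF sorted] lks by auto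
  have range: "range f \<subseteq> K" unfolding f_def using inK N1 by auto
  have mono: "mono f"
  proof (rule monoI)
    fix u v :: real assume "u \<le> v"
    then have "idx u \<le> idx v" unfolding idx_def using W(1) by (intro card_mono) auto
    then show "f u \<le> f v" unfolding f_def using le_all N1 by auto
  qed
  have idx0: "idx 0 = 0" unfolding idx_def using W(2) by (auto simp: card_eq_0_iff)
  have idx1: "idx 1 = N - 1"
  proof -
    have "{w\<in>W. w < 1} = W - {1}" using W(2) by force
    then show ?thesis unfolding idx_def N_def using W by simp
  qed
  have f0: "f 0 = 0"
  proof -
    obtain j where j: "j < N" "ks ! j = 0" using K(3) sks lks by (metis in_set_conv_nth)
    have "ks ! 0 \<le> 0" using le_all[of 0 j] j by auto
    moreover have "ks ! 0 \<ge> 0" using inK[of 0] N1 K(2) by auto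
    ultimately show ?thesis unfolding f_def idx0 by simp
  qed
  have f1: "f 1 = 1"
  proof -
    obtain j where j: "j < N" "ks ! j = 1" using K(4) sks lks by (metis in_set_conv_nth)
    have "ks ! (N-1) \<ge> 1" using le_all[of j "N-1"] j by auto
    moreover have "ks ! (N-1) \<le> 1" using inK[of "N-1"] N1 K(2) by auto
    ultimately show ?thesis unfolding f_def idx1 by simp
  qed
  have strict: "\<forall>a\<in>W. \<forall>b\<in>W. a < b \<longrightarrow> f a < f b"
  proof (intro ballI impI)
    fix a b assume ab: "a \<in> W" "b \<in> W" "a < b"
    have "{w\<in>W. w < a} \<subset> {w\<in>W. w < b}" using ab by auto
    then have lt: "idx a < idx b" unfolding idx_def using W(1) by (intro psubset_card_mono) auto
    have "{w\<in>W. w < b} \<subseteq> W - {b}" by auto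
    then have "idx b \<le> card (W - {b})" unfolding idx_def using W(1) by (intro card_mono) auto
    then have le: "idx b \<le> N - 1" unfolding N_def using ab W(1) by simp
    show "f a < f b" unfolding f_def using lt le sorted_wrt_nth_less[OF ssorted, of "idx a" "idx b"] lks N1
      by auto
  qed
  show ?thesis using mono f0 f1 strict range by blast
qed

lemma Gn_eq: "Gn n = insert 1 ((\<lambda>k. 1 - 1 / real k) ` {1..n-1})"
  unfolding Gn_def by auto

lemma Gn_finite: "finite (Gn n)" unfolding Gn_eq by simp

lemma Gn_sub: "Gn n \<subseteq> {0..1}"
  unfolding Gn_eq by (auto simp: field_simps)

lemma Gn_01: "n \<ge> 2 \<Longrightarrow> 0 \<in> Gn n \<and> 1 \<in> Gn n"
  unfolding Gn_eq by (auto intro!: image_eqI[of 0 _ 1])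

lemma Gn_card: "n \<ge> 1 \<Longrightarrow> card (Gn n) = n"
proof -
  assume n: "n \<ge> 1"
  have inj: "inj_on (\<lambda>k. 1 - 1 / real k) {1..n-1}"
    by (auto simp: inj_on_def field_simps)
  have "1 \<notin> (\<lambda>k. 1 - 1 / real k) ` {1..n-1}" by auto
  then show ?thesis unfolding Gn_eq using card_image[OF inj] n by simp
qed

lemma Gn_2: "Gn 2 = {0, 1}"
  unfolding Gn_eq by auto



lemma finite_K:
  assumes "goedel_set V" "infinite V" "n \<ge> 2"
  shows "\<exists>K. finite K \<and> K \<subseteq> V \<and> 0 \<in> K \<and> 1 \<in> K \<and> card K = n"
proof -
  have "infinite (V - {0, 1})" using assms(2) by simp
  then obtain K0 where K0': "finite K0 \<and> card K0 = n - 2 \<and> K0 \<subseteq> V - {0,1}"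
    using infinite_arbitrarily_large[of "V - {0,1}" "n - 2"] by blast
  then have K0: "K0 \<subseteq> V - {0,1}" "finite K0" "card K0 = n - 2" by auto
  have n0: "(0::real) \<notin> K0" "(1::real) \<notin> K0" using K0(1) by auto
  have "card (insert 0 (insert 1 K0)) = Suc (Suc (card K0))" using K0(2) n0 by simp
  then have c: "card (insert 0 (insert 1 K0)) = n" using K0(3) assms(3) by simp
  have V: "0 \<in> V" "1 \<in> V" using assms(1) unfolding goedel_set_def by auto
  have s: "insert 0 (insert 1 K0) \<subseteq> V" using K0(1) V by blast
  have f: "finite (insert 0 (insert 1 K0))" using K0(2) by simp
  show ?thesis using c s f by blast
qed

lemma val_dir1:
  assumes "goedel_set V" "infinite V" "n \<ge> 2" "valid TYPE('u) V A"
  shows "valid TYPE('u) (Gn n) A"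
  unfolding valid_def
proof (intro allI impI)
  fix U :: "'u set" and c :: "nat \<Rightarrow> 'u" and p :: "nat \<Rightarrow> 'u list \<Rightarrow> real" and e :: "nat \<Rightarrow> 'u"
  assume H: "interp (Gn n) U c p \<and> range e \<subseteq> U"
  obtain K where K: "finite K" "K \<subseteq> V" "0 \<in> K" "1 \<in> K" "card K = n"
    using finite_K[OF assms(1-3)] by blast
  have V01: "V \<subseteq> {0..1}" using assms(1) unfolding goedel_set_def by auto
  obtain f where f: "mono f" "f 0 = 0" "f 1 = 1" "\<forall>a\<in>Gn n. \<forall>b\<in>Gn n. a < b \<longrightarrow> f a < f b" "range f \<subseteq> K"
  proof -
    have KV: "K \<subseteq> {0..1}" using K(2) V01 by blast
    have cK: "card K = card (Gn n)" using K(5) Gn_card[of n] assms(3) by simp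
    show ?thesis using that embed[OF Gn_finite Gn_sub conjunct1[OF Gn_01[OF assms(3)]] conjunct2[OF Gn_01[OF assms(3)]]
        K(1) KV K(3,4) cK] by blast
  qed
  have I': "interp V U c (\<lambda>P xs. f (p P xs))" using H f(5) K(2) unfolding interp_def by blast
  have "eval U c (\<lambda>P xs. f (p P xs)) e A = 1" using assms(4) I' H unfolding valid_def by blast
  moreover have tr: "eval U c p e A \<in> Gn n \<and> eval U c (\<lambda>P xs. f (p P xs)) e A = f (eval U c p e A)"
    apply (rule transfer[OF Gn_finite conjunct1[OF Gn_01[OF assms(3)]] conjunct2[OF Gn_01[OF assms(3)]] f(1,2)
          strict_gimp[OF f(4) f(1) f(3) conjunct2[OF Gn_01[OF assms(3)]]]])
    using H unfolding interp_def by auto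
  ultimately have fe: "f (eval U c p e A) = 1" by simp
  show "eval U c p e A = 1"
  proof (rule ccontr)
    assume "eval U c p e A \<noteq> 1"
    moreover have "eval U c p e A \<le> 1" using tr Gn_sub[of n] by auto
    ultimately have "eval U c p e A < 1" by linarith
    then have "f (eval U c p e A) < f 1" using f(4) tr Gn_01[OF assms(3)] by blast
    then have "f (eval U c p e A) < 1" using f(3) by simp
    then show False using fe by simp
  qed
qed

lemma validD: "valid TYPE('u) V A \<Longrightarrow> interp V (U::'u set) c p \<Longrightarrow> range e \<subseteq> U \<Longrightarrow> eval U c p e A = 1"
  unfolding valid_def by blast

lemma val_dir2:
  assumes V01: "V \<subseteq> {0..1}" and qB: "qfree B"
    and all: "\<forall>n\<ge>2. valid TYPE('u) (Gn n) (alls xs (exs ys B))"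
  shows "valid TYPE('u) V (alls xs (exs ys B))"
  unfolding valid_def
proof (intro allI impI)
  fix U :: "'u set" and c :: "nat \<Rightarrow> 'u" and p :: "nat \<Rightarrow> 'u list \<Rightarrow> real" and e :: "nat \<Rightarrow> 'u"
  assume H: "interp V U c p \<and> range e \<subseteq> U"
  show "eval U c p e (alls xs (exs ys B)) = 1"
  proof (rule ccontr)
    assume ne: "eval U c p e (alls xs (exs ys B)) \<noteq> 1"
    moreover have "eval U c p e (alls xs (exs ys B)) \<in> {0..1}"
      by (rule eval_bounds[OF conjunct1[OF H] V01 conjunct2[OF H]])
    ultimately have lt1: "eval U c p e (alls xs (exs ys B)) < 1" by auto
    then obtain g where g: "range g \<subseteq> U" "eval U c p g (exs ys B) < 1"
      using alls_witness[OF conjunct1[OF H] V01 conjunct2[OF H] lt1] by blast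
    obtain U' c' g' where R: "finite U'" "U' \<subseteq> U" "U' \<noteq> {}" "\<forall>k. c' k \<in> U'" "range g' \<subseteq> U'"
        "eval U c' p g' (exs ys B) = eval U c p g (exs ys B)"
      using restrict[OF conjunct1[OF H] g(1), of "exs ys B"] by blast
    have I1: "interp V U c' p" using H R(2,4) unfolding interp_def by blast
    have I2: "interp V U' c' p" using interp_sub[OF I1 R(2,3,4)] .
    have lt: "eval U' c' p g' (exs ys B) < 1"
      using exs_sub[OF I1 V01 R(2,3) qB R(5), where ys=ys] R(6) g(2) by simp
    define W where "W = insert 0 (insert 1 (\<Union>(P,ts)\<in>atoms (exs ys B). p P ` {xs. set xs \<subseteq> U' \<and> length xs = length ts}))"
    have Wf: "finite W" unfolding W_def using finite_atoms finite_lists_length_eq[OF R(1)] by auto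
    have pV: "\<And>P xs. set xs \<subseteq> U' \<Longrightarrow> p P xs \<in> V" using I2 unfolding interp_def by blast
    have W01: "W \<subseteq> {0..1}" unfolding W_def using pV V01 by auto
    have Wat: "\<forall>P ts xs. (P,ts) \<in> atoms (exs ys B) \<longrightarrow> set xs \<subseteq> U' \<longrightarrow> length xs = length ts \<longrightarrow> p P xs \<in> W"
      unfolding W_def by blast
    define N where "N = card W"
    have W0: "0 \<in> W" "1 \<in> W" unfolding W_def by auto
    have "card {0::real,1} \<le> card W" by (rule card_mono[OF Wf]) (simp add: W0)
    then have N2: "N \<ge> 2" unfolding N_def by simp
    obtain f where f: "mono f" "f 0 = 0" "f 1 = 1" "\<forall>a\<in>W. \<forall>b\<in>W. a < b \<longrightarrow> f a < f b" "range f \<subseteq> Gn N"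
    proof -
      have cG: "card (Gn N) = card W" using Gn_card[of N] N2 unfolding N_def by simp
      show ?thesis using that embed[OF Wf W01 W0 Gn_finite Gn_sub conjunct1[OF Gn_01[OF N2]] conjunct2[OF Gn_01[OF N2]] cG]
        by blast
    qed
    have I3: "interp (Gn N) U' c' (\<lambda>P xs. f (p P xs))" using R(3,4) f(5) unfolding interp_def by blast
    have tr: "eval U' c' p g' (exs ys B) \<in> W \<and>
       eval U' c' (\<lambda>P xs. f (p P xs)) g' (exs ys B) = f (eval U' c' p g' (exs ys B))"
      by (rule transfer[OF Wf W0 f(1,2) strict_gimp[OF f(4) f(1) f(3) W0(2)] R(3,4) Wat R(5)])
    have "f (eval U' c' p g' (exs ys B)) < f 1" using f(4) tr lt W0 by blast
    then have "f (eval U' c' p g' (exs ys B)) < 1" using f(3) by simp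
    then have "eval U' c' (\<lambda>P xs. f (p P xs)) g' (alls xs (exs ys B)) < 1"
      using alls_le[OF I3 Gn_sub R(5), of xs "exs ys B"] tr by simp
    moreover have "valid TYPE('u) (Gn N) (alls xs (exs ys B))" using all N2 by blast
    then have "eval U' c' (\<lambda>P xs. f (p P xs)) g' (alls xs (exs ys B)) = 1"
      using validD I3 R(5) by blast
    ultimately show False by simp
  qed
qed

lemma interp_mono: "V \<subseteq> V' \<Longrightarrow> interp V U c p \<Longrightarrow> interp V' U c p"
  unfolding interp_def by (meson subsetD)

lemma sat_mono: "V \<subseteq> V' \<Longrightarrow> sat1 TYPE('u) V A \<Longrightarrow> sat1 TYPE('u) V' A"
  unfolding sat1_def by (meson interp_mono)

lemma satI: "interp V (U::'u set) c p \<Longrightarrow> range e \<subseteq> U \<Longrightarrow> eval U c p e A = 1 \<Longrightarrow> sat1 TYPE('u) V A"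
  unfolding sat1_def by blast

lemma sat_dir1:
  assumes V01: "V \<subseteq> {0..1}" and qB: "qfree B"
    and S: "sat1 TYPE('u) V (exs xs (alls ys B))"
  shows "sat1 TYPE('u) {0,1} (exs xs (alls ys B))"
proof -
  obtain U :: "'u set" and c p e where H: "interp V U c p" "range e \<subseteq> U" "eval U c p e (exs xs (alls ys B)) = 1"
    using S unfolding sat1_def by blast
  have pos: "0 < eval U c p e (exs xs (alls ys B))" using H(3) by simp
  obtain g where g: "range g \<subseteq> U" "0 < eval U c p g (alls ys B)"
    using exs_witness[OF H(1) V01 H(2) pos] by blast
  obtain U' c' g' where R: "finite U'" "U' \<subseteq> U" "U' \<noteq> {}" "\<forall>k. c' k \<in> U'" "range g' \<subseteq> U'"
      "eval U c' p g' (alls ys B) = eval U c p g (alls ys B)"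
    using restrict[OF H(1) g(1), of "alls ys B"] by blast
  have I1: "interp V U c' p" using H R(2,4) unfolding interp_def by blast
  have I2: "interp V U' c' p" using interp_sub[OF I1 R(2,3,4)] .
  have gt: "0 < eval U' c' p g' (alls ys B)"
    using alls_sub[OF I1 V01 R(2,3) qB R(5), where ys=ys] R(6) g(2) by simp
  define W where "W = insert 0 (insert 1 (\<Union>(P,ts)\<in>atoms (alls ys B). p P ` {xs. set xs \<subseteq> U' \<and> length xs = length ts}))"
  have Wf: "finite W" unfolding W_def using finite_atoms finite_lists_length_eq[OF R(1)] by auto
  have pV: "\<And>P xs. set xs \<subseteq> U' \<Longrightarrow> p P xs \<in> V" using I2 unfolding interp_def by blast
    have W01: "W \<subseteq> {0..1}" unfolding W_def using pV V01 by auto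
  have Wat: "\<forall>P ts xs. (P,ts) \<in> atoms (alls ys B) \<longrightarrow> set xs \<subseteq> U' \<longrightarrow> length xs = length ts \<longrightarrow> p P xs \<in> W"
    unfolding W_def by blast
  have W0: "0 \<in> W" "1 \<in> W" unfolding W_def by auto
  define f :: "real \<Rightarrow> real" where "f = (\<lambda>v. if 0 < v then 1 else 0)"
  have fm: "mono f" unfolding f_def mono_def by auto
  have f0: "f 0 = 0" unfolding f_def by simp
  have gi1: "\<And>a b. 0 \<le> a \<Longrightarrow> 0 \<le> b \<Longrightarrow> f (gimp a b) = gimp (f a) (f b)"
    unfolding f_def gimp_def by auto
  have gi: "\<forall>a\<in>W. \<forall>b\<in>W. f (gimp a b) = gimp (f a) (f b)"
    using W01 gi1 by (meson atLeastAtMost_iff subsetD)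
  have I3: "interp {0,1} U' c' (\<lambda>P xs. f (p P xs))" using R(3,4) unfolding interp_def f_def by auto
  have tr: "eval U' c' p g' (alls ys B) \<in> W \<and>
     eval U' c' (\<lambda>P xs. f (p P xs)) g' (alls ys B) = f (eval U' c' p g' (alls ys B))"
    by (rule transfer[OF Wf W0 fm f0 gi R(3,4) Wat R(5)])
  then have e1: "eval U' c' (\<lambda>P xs. f (p P xs)) g' (alls ys B) = 1" using gt unfolding f_def by simp
  have V2: "{0,1::real} \<subseteq> {0..1}" by auto
  have "1 \<le> eval U' c' (\<lambda>P xs. f (p P xs)) g' (exs xs (alls ys B))"
    using exs_ge[OF I3 V2 R(5), where xs=xs and C="alls ys B"] e1 by simp
  moreover have "eval U' c' (\<lambda>P xs. f (p P xs)) g' (exs xs (alls ys B)) \<le> 1"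
    using eval_bounds[OF I3 V2 R(5)] by auto
  ultimately have "eval U' c' (\<lambda>P xs. f (p P xs)) g' (exs xs (alls ys B)) = 1" by simp
  then show ?thesis using satI[OF I3 R(5)] by blast
qed


lemma val_iff:
  assumes "goedel_set V" "infinite V" "BS_val A"
  shows "valid TYPE('u) V A \<longleftrightarrow> (\<forall>n\<ge>2. valid TYPE('u) (Gn n) A)"
proof -
  obtain xs ys B where B: "qfree B" "A = alls xs (exs ys B)" using assms(3) unfolding BS_val_def by blast
  have V01: "V \<subseteq> {0..1}" using assms(1) unfolding goedel_set_def by auto
  show ?thesis
  proof
    assume "valid TYPE('u) V A"
    then show "\<forall>n\<ge>2. valid TYPE('u) (Gn n) A" using val_dir1[OF assms(1,2)] by blast
  next
    assume "\<forall>n\<ge>2. valid TYPE('u) (Gn n) A"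
    then show "valid TYPE('u) V A" using val_dir2[OF V01 B(1)] B(2) by blast
  qed
qed

lemma sat_iff:
  assumes "goedel_set V" "BS_sat A"
  shows "sat1 TYPE('u) V A \<longleftrightarrow> (\<forall>n\<ge>2. sat1 TYPE('u) (Gn n) A)"
proof -
  obtain xs ys B where B: "qfree B" "A = exs xs (alls ys B)" using assms(2) unfolding BS_sat_def by blast
  have V01: "V \<subseteq> {0..1}" and V2: "{0,1} \<subseteq> V" using assms(1) unfolding goedel_set_def by auto
  show ?thesis
  proof
    assume "sat1 TYPE('u) V A"
    then have s: "sat1 TYPE('u) {0,1} A" using sat_dir1[OF V01 B(1)] B(2) by blast
    show "\<forall>n\<ge>2. sat1 TYPE('u) (Gn n) A"
    proof (intro allI impI)
      fix n :: nat assume "n \<ge> 2"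
      then have "{0,1} \<subseteq> Gn n" using Gn_01 by auto
      then show "sat1 TYPE('u) (Gn n) A" using sat_mono s by blast
    qed
  next
    assume "\<forall>n\<ge>2. sat1 TYPE('u) (Gn n) A"
    then have "sat1 TYPE('u) (Gn 2) A" by blast
    then show "sat1 TYPE('u) V A" using sat_mono V2 Gn_2 by metis
  qed
qed

theorem corollary5p4:
  fixes V :: "real set"
  assumes "goedel_set V" and "infinite V"
  shows "(\<forall>A. BS_val A \<longrightarrow>
            (valid TYPE('u) V A \<longleftrightarrow> (\<forall>n\<ge>2. valid TYPE('u) (Gn n) A)))
       \<and> (\<forall>A. BS_sat A \<longrightarrow>
            (sat1 TYPE('u) V A \<longleftrightarrow> (\<forall>n\<ge>2. sat1 TYPE('u) (Gn n) A)))
       \<and> {A. BS_val A \<and> valid TYPE('u) {0..1} A}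
           = (\<Inter>n\<in>{2..}. {A. BS_val A \<and> valid TYPE('u) (Gn n) A})"
proof (intro conjI)
  show "\<forall>A. BS_val A \<longrightarrow> (valid TYPE('u) V A \<longleftrightarrow> (\<forall>n\<ge>2. valid TYPE('u) (Gn n) A))"
    using val_iff[OF assms] by blast
  show "\<forall>A. BS_sat A \<longrightarrow> (sat1 TYPE('u) V A \<longleftrightarrow> (\<forall>n\<ge>2. sat1 TYPE('u) (Gn n) A))"
    using sat_iff[OF assms(1)] by blast
  have g: "goedel_set {0..1::real}" unfolding goedel_set_def by auto
  have i: "infinite {0..1::real}" by (simp add: infinite_Icc)
  show "{A. BS_val A \<and> valid TYPE('u) {0..1} A}
           = (\<Inter>n\<in>{2..}. {A. BS_val A \<and> valid TYPE('u) (Gn n) A})"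
    using val_iff[OF g i] by auto
qed

end
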